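(* Let $(X_n)_{n\ge1}$ be a sequence of finite sets and $(a_n(q))$ a $q$-Euler–Gauss sequence. Let $n\ge1$ be such that $a_d(1)\neq0$ for every divisor $d$ of $n$ for which $n/d$ is not a prime power. If $|X_d|=a_d(1)$ for all $d\mid n$ and $\mathbb{Z}_n$ acts on $X_n$ so that $|X_n^i|=|X_{\gcd(n,i)}|$ for all $i\in\mathbb{Z}_n$, then the triple $(X_n,\mathbb{Z}_n,a_n(q))$ exhibits the cyclic sieving phenomenon.
   Context: $\mu$ is the Möbius function, $[n]_q=1+q+\dots+q^{n-1}$; polynomial congruences modulo $[n]_q$ mean divisibility of the difference by $[n]_q$ in $\mathbb{Z}[q]$. A sequence $(a_n(q))$ in $\mathbb{Z}[q]$ is a $q$-Euler–Gauss sequence if for all $n\ge1$, $\prod_{d\mid n,\,\mu(d)=1}a_{n/d}(q^d)\equiv\prod_{d\mid n,\,\mu(d)=-1}a_{n/d}(q^d)\pmod{[n]_q}$. Here "$n/d$ is not a prime power" means $n/d$ has at least two distinct prime divisors ($1=p^0$ counts as a prime power). $\mathbb{Z}_n$ is the additive group of integers mod $n$, elements $i$ identified with integer representatives; $X_n^i$ is the fixed point set of $i$. A triple $(X,\mathbb{Z}_n,f(q))$ exhibits the cyclic sieving phenomenon if $|X^i|=f(\omega_n^i)$ for all $i\in\mathbb{Z}_n$, where $\omega_n$ is a primitive $n$-th root of unity. *)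

theory Defs
  imports Complex_Main "HOL-Computational_Algebra.Polynomial" "HOL-Computational_Algebra.Squarefree"
    "HOL-Algebra.Elementary_Groups" "HOL-Algebra.Group_Action"
begin

definition mu :: "nat \<Rightarrow> int" where
  "mu d = (if squarefree d then (-1) ^ card (prime_factors d) else 0)"

definition q_int :: "nat \<Rightarrow> int poly" where
  "q_int n = (\<Sum>i<n. monom 1 i)"

definition subst_pow :: "int poly \<Rightarrow> nat \<Rightarrow> int poly" where
  "subst_pow p d = pcompose p (monom 1 d)"

definition q_euler_gauss :: "(nat \<Rightarrow> int poly) \<Rightarrow> bool" where
  "q_euler_gauss a \<longleftrightarrow> (\<forall>n\<ge>1.
     q_int n dvd
       ((\<Prod>d\<in>{d. d dvd n \<and> mu d = 1}. subst_pow (a (n div d)) d)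
        - (\<Prod>d\<in>{d. d dvd n \<and> mu d = -1}. subst_pow (a (n div d)) d)))"

text \<open>m is a prime power (1 = p^0 counts) iff it has at most one prime divisor.\<close>
definition prime_power_or_one :: "nat \<Rightarrow> bool" where
  "prime_power_or_one m \<longleftrightarrow> card (prime_factors m) \<le> 1"

definition fixpts :: "'b set \<Rightarrow> (int \<Rightarrow> 'b \<Rightarrow> 'b) \<Rightarrow> int \<Rightarrow> 'b set" where
  "fixpts X phi i = {x \<in> X. phi i x = x}"

text \<open>Cyclic sieving for Z_n (as integer_mod_group n, carrier {0..<n}),
  with omega_n = exp(2 pi i / n).\<close>
definition cyclic_sieving :: "'b set \<Rightarrow> nat \<Rightarrow> (int \<Rightarrow> 'b \<Rightarrow> 'b) \<Rightarrow> int poly \<Rightarrow> bool" where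
  "cyclic_sieving X n phi f \<longleftrightarrow>
     (\<forall>i \<in> carrier (integer_mod_group n).
        complex_of_nat (card (fixpts X phi i)) =
        poly (map_poly of_int f) (exp (2 * pi * \<i> / of_nat n) ^ nat i))"

end

theory Submission imports Defs "HOL-Analysis.Complex_Transcendental" begin

definition ev :: "int poly \<Rightarrow> complex \<Rightarrow> complex" where
  "ev p z = poly (map_poly of_int p) z"

lemma map_of_int_add: "map_poly (of_int :: int \<Rightarrow> complex) (p + q) = map_poly of_int p + map_poly of_int q"
  by (intro poly_eqI) (simp add: coeff_map_poly)

lemma map_of_int_diff: "map_poly (of_int :: int \<Rightarrow> complex) (p - q) = map_poly of_int p - map_poly of_int q"
  by (intro poly_eqI) (simp add: coeff_map_poly)

lemma map_of_int_mult: "map_poly (of_int :: int \<Rightarrow> complex) (p * q) = map_poly of_int p * map_poly of_int q"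
  by (intro poly_eqI) (simp add: coeff_map_poly coeff_mult)

lemma ev_add: "ev (p + q) z = ev p z + ev q z"
  by (simp add: ev_def map_of_int_add)
lemma ev_diff: "ev (p - q) z = ev p z - ev q z"
  by (simp add: ev_def map_of_int_diff)
lemma ev_mult: "ev (p * q) z = ev p z * ev q z"
  by (simp add: ev_def map_of_int_mult)
lemma ev_const: "ev [:c:] z = of_int c"
proof -
  have "map_poly (of_int :: int \<Rightarrow> complex) [:c:] = [:of_int c:]"
    by (intro poly_eqI) (simp add: coeff_map_poly coeff_pCons split: nat.split)
  then show ?thesis by (simp add: ev_def)
qed
lemma ev_zero: "ev 0 z = 0" by (simp add: ev_def)
lemma ev_sum: "ev (\<Sum>i\<in>A. f i) z = (\<Sum>i\<in>A. ev (f i) z)"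
  by (induction A rule: infinite_finite_induct) (auto simp: ev_zero ev_add)
lemma ev_one: "ev 1 z = 1"
  by (simp add: ev_def)
lemma ev_prod: "ev (\<Prod>i\<in>A. f i) z = (\<Prod>i\<in>A. ev (f i) z)"
  by (induction A rule: infinite_finite_induct) (auto simp: ev_one ev_mult)
lemma ev_monom: "ev (monom 1 d) z = z ^ d"
  by (simp add: ev_def map_poly_monom poly_monom)
lemma ev_pcompose: "ev (pcompose p q) z = ev p (ev q z)"
proof (induction p)
  case 0
  then show ?case by (simp add: ev_def)
next
  case (pCons a p)
  have "ev (pcompose (pCons a p) q) z = ev ([:a:] + q * pcompose p q) z"
    by (simp add: pcompose_pCons)
  also have "\<dots> = of_int a + ev q z * ev p (ev q z)"
    by (simp add: ev_add ev_mult ev_const pCons)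
  also have "\<dots> = ev (pCons a p) (ev q z)"
    by (simp add: ev_def map_poly_pCons)
  finally show ?case .
qed
lemma ev_subst_pow: "ev (subst_pow p d) z = ev p (z ^ d)"
  by (simp add: subst_pow_def ev_pcompose ev_monom)
lemma ev_at1: "ev p 1 = of_int (poly p 1)"
proof (induction p)
  case 0 then show ?case by (simp add: ev_def)
next
  case (pCons a p) then show ?case by (simp add: ev_def map_poly_pCons)
qed
lemma ev_q_int: assumes "z ^ N = 1" "z \<noteq> 1" shows "ev (q_int N) z = 0"
proof -
  have "ev (q_int N) z = (\<Sum>i<N. z ^ i)"
    by (simp add: q_int_def ev_sum ev_monom)
  also have "\<dots> = 0" using assms by (simp add: geometric_sum)
  finally show ?thesis .
qed
lemma ev_dvd: assumes "q_int N dvd P" "z ^ N = 1" "z \<noteq> 1" shows "ev P z = 0"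
proof -
  obtain r where "P = q_int N * r" using assms(1) by (auto elim: dvdE)
  then show ?thesis using ev_q_int[OF assms(2,3)] by (simp add: ev_mult)
qed

definition E :: "nat \<Rightarrow> nat \<Rightarrow> complex" where
  "E t N = exp (2 * pi * \<i> * of_nat t / of_nat N)"

lemma E_pow: assumes "e dvd N" "N > 0" shows "E t N ^ e = E t (N div e)"
proof -
  obtain k where k: "N = e * k" using assms(1) by (auto elim: dvdE)
  have e0: "e > 0" "k > 0" using assms k by auto
  have "E t N ^ e = exp (of_nat e * (2 * pi * \<i> * of_nat t / of_nat N))"
    by (simp only: E_def exp_of_nat_mult)
  also have "of_nat e * (2 * pi * \<i> * of_nat t / of_nat N) = 2 * pi * \<i> * of_nat t / (of_nat k :: complex)"
    using e0 by (simp add: k field_simps)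
  finally show ?thesis using e0 by (simp add: E_def k)
qed

lemma E_1: "E t 1 = 1"
proof -
  have "E t 1 = exp (of_nat t * (2 * of_real pi * \<i>))"
    by (simp add: E_def mult_ac)
  also have "\<dots> = 1" by (simp only: exp_of_nat_mult exp_two_pi_i) simp
  finally show ?thesis .
qed

lemma E_N: assumes "N > 0" shows "E t N ^ N = 1"
  using E_pow[of N N t] assms E_1 by simp

lemma E_eq_1: assumes "N > 0" shows "E t N = 1 \<longleftrightarrow> N dvd t"
proof
  assume "N dvd t"
  then obtain k where "t = N * k" by (auto elim: dvdE)
  then have "E t N = E k 1" using assms by (simp add: E_def mult_ac)
  then show "E t N = 1" using E_1[of k] by simp
next
  assume "E t N = 1"
  then obtain m :: int where m: "2 * pi * real t / real N = of_int (2 * m) * pi"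
    unfolding E_def exp_eq_1 by auto
  then have "real t = of_int m * real N" using assms by (simp add: field_simps)
  then have "int t = m * int N"
    by (metis of_int_eq_iff of_int_mult of_int_of_nat_eq)
  then show "N dvd t"
    by (metis dvd_triv_right int_dvd_int_iff mult.commute)
qed

lemma mu_mult_p:
  assumes p: "prime p" and "\<not> p dvd e" and sf: "squarefree e"
  shows "squarefree (e * p) \<and> mu (e * p) = - mu e"
proof -
  have e0: "e \<noteq> 0" using sf not_squarefree_0 by (cases "e = 0") auto
  have cop: "coprime e p" using assms by (metis coprime_commute prime_imp_coprime)
  have sf2: "squarefree (e * p)" using squarefree_mult_coprime[OF cop sf squarefree_prime[OF p]] .
  have pf: "prime_factors (e * p) = insert p (prime_factors e)"
    using prime_factors_product[of e p] e0 p prime_gt_0_nat by (auto simp: prime_prime_factors)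
  have "p \<notin> prime_factors e" using assms by auto
  then have "card (prime_factors (e * p)) = Suc (card (prime_factors e))"
    by (simp add: pf)
  then show ?thesis using sf sf2 by (simp add: mu_def)
qed

lemma sf_div_p:
  assumes p: "prime (p::nat)" and "p dvd e" and sf: "squarefree e"
  shows "\<not> p dvd (e div p)"
proof
  assume "p dvd e div p"
  then have "p * p dvd e" using assms(2)
    by (metis dvd_div_iff_mult nat_dvd_not_less prime_gt_0_nat p sf mult.commute not_squarefree_0 neq0_conv)
  then have "p\<^sup>2 dvd e" by (simp add: power2_eq_square)
  then have "p dvd 1" using squarefreeD[OF sf] by blast
  then show False using p by simp
qed

definition tog :: "nat \<Rightarrow> nat \<Rightarrow> nat" where
  "tog p e = (if p dvd e then e div p else e * p)"

lemma tog_props: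
  assumes p: "prime p" and sf: "squarefree e"
  shows "tog p (tog p e) = e" "squarefree (tog p e)" "mu (tog p e) = - mu e"
proof -
  have p0: "p > 0" using p prime_gt_0_nat by auto
  have "tog p (tog p e) = e \<and> squarefree (tog p e) \<and> mu (tog p e) = - mu e"
  proof (cases "p dvd e")
    case True
    define e0 where "e0 = e div p"
    have e: "e = e0 * p" using True by (simp add: e0_def)
    have nd: "\<not> p dvd e0" using sf_div_p[OF p True sf] by (simp add: e0_def)
    have sf0: "squarefree e0" using sf e squarefree_multD(1) by blast
    have "tog p e = e0" using True by (simp add: tog_def e0_def)
    moreover have "tog p e0 = e" using nd by (simp add: tog_def e)
    moreover have "mu e = - mu e0" using mu_mult_p[OF p nd sf0] e by simp
    ultimately show ?thesis using sf0 by simp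
  next
    case False
    have "tog p e = e * p" using False by (simp add: tog_def)
    moreover have "tog p (e * p) = e" using p0 by (simp add: tog_def)
    ultimately show ?thesis using mu_mult_p[OF p False sf] by simp
  qed
  then show "tog p (tog p e) = e" "squarefree (tog p e)" "mu (tog p e) = - mu e" by auto
qed

lemma tog_dvd:
  assumes p: "prime p" and "p dvd N" "e dvd N" "squarefree e"
  shows "tog p e dvd N"
proof (cases "p dvd e")
  case True
  then obtain c where c: "e = p * c" by (auto elim: dvdE)
  have "tog p e = c" using True c p prime_gt_0_nat by (simp add: tog_def)
  then show ?thesis using assms c by (metis dvd_triv_right dvd_trans)
next
  case False
  have cop: "coprime e p" using False p by (metis coprime_commute prime_imp_coprime)
  then show ?thesis using False assms by (simp add: tog_def divides_mult)
qed

lemma gcd_toggle: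
  fixes N t e0 p :: nat
  assumes p: "prime p" and mlt: "multiplicity p t < multiplicity p N" and t: "t > 0"
    and N: "N > 0" and dv: "e0 * p dvd N" and nd: "\<not> p dvd e0"
  shows "gcd (N div (e0 * p)) t = gcd (N div e0) t"
proof -
  define K where "K = N div (e0 * p)"
  have NK: "N = e0 * p * K" using dv by (simp add: K_def)
  have K0: "K > 0" "e0 > 0" using N NK by auto
  have p0: "p > 0" using p prime_gt_0_nat by auto
  have NdK: "N div e0 = p * K" using NK K0 by simp
  define G where "G = gcd (p * K) t"
  have G0: "G \<noteq> 0" using t by (simp add: G_def)
  have "G dvd K"
  proof (rule multiplicity_le_imp_dvd[OF G0])
    fix q :: nat assume q: "prime q"
    have GpK: "multiplicity q G \<le> multiplicity q (p * K)"
      using K0 p0 by (intro dvd_imp_multiplicity_le) (auto simp: G_def)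
    show "multiplicity q G \<le> multiplicity q K"
    proof (cases "q = p")
      case True
      have "multiplicity q G \<le> multiplicity q t"
        using t by (intro dvd_imp_multiplicity_le) (auto simp: G_def)
      also have "\<dots> < multiplicity p N" using mlt True by simp
      also have "multiplicity p N = multiplicity p e0 + multiplicity p p + multiplicity p K"
        using K0 p0 p by (simp add: NK prime_elem_multiplicity_mult_distrib)
      also have "\<dots> = 1 + multiplicity p K"
        using nd p by (simp add: not_dvd_imp_multiplicity_0)
      finally show ?thesis using True by simp
    next
      case False
      have "multiplicity q (p * K) = multiplicity q p + multiplicity q K"
        using K0 p0 q by (simp add: prime_elem_multiplicity_mult_distrib)
      also have "multiplicity q p = 0"
      proof -
        have "\<not> q dvd p" using primes_dvd_imp_eq[OF q p] False by blast
        then show ?thesis by (simp add: not_dvd_imp_multiplicity_0)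
      qed
      finally show ?thesis using GpK by simp
    qed
  qed
  then have "G dvd gcd K t" by (simp add: G_def)
  moreover have "gcd K t dvd G" by (simp add: G_def)
  ultimately have "G = gcd K t" by (rule dvd_antisym)
  then show ?thesis by (simp add: G_def K_def NdK)
qed

lemma gcd_tog:
  fixes N t e p :: nat
  assumes p: "prime p" and mlt: "multiplicity p t < multiplicity p N" and t: "t > 0"
    and N: "N > 0" and pN: "p dvd N" and eN: "e dvd N" and sf: "squarefree e"
  shows "gcd (N div tog p e) t = gcd (N div e) t"
proof (cases "p dvd e")
  case True
  define e0 where "e0 = e div p"
  have e: "e = e0 * p" using True by (simp add: e0_def)
  have nd: "\<not> p dvd e0" using sf_div_p[OF p True sf] by (simp add: e0_def)
  have "tog p e = e0" using True by (simp add: tog_def e0_def)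
  then show ?thesis using gcd_toggle[OF p mlt t N _ nd] eN e by simp
next
  case False
  have "tog p e = e * p" using False by (simp add: tog_def)
  moreover have "e * p dvd N" using tog_dvd[OF p pN eN sf] False by (simp add: tog_def)
  ultimately show ?thesis using gcd_toggle[OF p mlt t N _ False] by simp
qed

lemma nonpp:
  fixes n N e t p :: nat
  assumes n: "n > 0" and Nn: "N dvd n" and eN: "e dvd N" and mue: "mu e = 1" and e1: "e \<noteq> 1"
    and p: "prime p" and mlt: "multiplicity p t < multiplicity p N" and t: "t > 0"
  shows "\<not> prime_power_or_one (n div gcd (N div e) t)"
proof -
  define d where "d = gcd (N div e) t"
  have d0: "d > 0" using t by (simp add: d_def)
  have N0: "N > 0" using n Nn by (auto intro: Nat.gr0I)
  have e0: "e > 0" using eN N0 by (auto intro: Nat.gr0I)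
  obtain r where r: "N div e = d * r" using d_def by (metis dvd_def gcd_dvd1)
  obtain c where c: "n = N * c" using Nn by (auto elim: dvdE)
  have Ne: "N = e * (N div e)" using eN by simp
  have nd: "n = d * (e * r * c)" using c Ne r by (metis mult.commute mult.left_commute)
  have ndiv: "n div d = e * r * c" using nd d0 by simp
  have nd0: "n div d > 0" using nd n by (metis ndiv mult_eq_0_iff neq0_conv)
  have sf: "squarefree e" using mue by (auto simp: mu_def split: if_splits)
  have ev: "even (card (prime_factors e))"
  proof (rule ccontr)
    assume "odd (card (prime_factors e))"
    then have "(-1::int) ^ card (prime_factors e) = -1" by simp
    then show False using mue sf by (simp add: mu_def)
  qed
  have "prime_factors e \<noteq> {}"
  proof
    assume "prime_factors e = {}"
    then have "prime_factorization e = {#}" by simp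
    then have "is_unit e" using e0 by (simp add: prime_factorization_empty_iff)
    then show False using e1 by simp
  qed
  then have "card (prime_factors e) \<noteq> 0" by simp
  with ev have c2: "card (prime_factors e) \<ge> 2" by presburger
  have "\<not> prime_factors e \<subseteq> {p}"
  proof
    assume "prime_factors e \<subseteq> {p}"
    then have "card (prime_factors e) \<le> card {p}" by (intro card_mono) auto
    then show False using c2 by simp
  qed
  then obtain q where q: "q \<in> prime_factors e" "q \<noteq> p" by auto
  have q1: "q \<in> prime_factors (n div d)"
    using q nd0 ndiv by (auto simp: prime_factors_dvd intro: dvd_trans)
  have "multiplicity p d \<le> multiplicity p t"
    using t by (intro dvd_imp_multiplicity_le) (auto simp: d_def)
  also have "\<dots> < multiplicity p N" by (rule mlt)
  also have "\<dots> \<le> multiplicity p n" using Nn n by (intro dvd_imp_multiplicity_le) auto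
  also have "multiplicity p n = multiplicity p d + multiplicity p (n div d)"
    using nd0 d0 p ndiv nd by (metis neq0_conv prime_elem_multiplicity_mult_distrib prime_imp_prime_elem)
  finally have "multiplicity p (n div d) > 0" by simp
  then have p1: "p \<in> prime_factors (n div d)"
    using p nd0 by (auto simp: prime_factors_multiplicity)
  have "{p, q} \<subseteq> prime_factors (n div d)" using p1 q1 by auto
  then have "card {p, q} \<le> card (prime_factors (n div d))" by (intro card_mono) auto
  then show ?thesis using q(2) by (simp add: prime_power_or_one_def d_def)
qed

lemma div_dvd_self': "d dvd (N::nat) \<Longrightarrow> N div d dvd N"
  by (metis dvd_mult_div_cancel dvd_triv_right)

lemma main_lemma:
  fixes a :: "nat \<Rightarrow> int poly" and n :: nat
  assumes EG: "q_euler_gauss a" and n: "n > 0"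
    and nz: "\<And>d. d dvd n \<Longrightarrow> \<not> prime_power_or_one (n div d) \<Longrightarrow> poly (a d) 1 \<noteq> 0"
  shows "N dvd n \<Longrightarrow> ev (a N) (E t N) = of_int (poly (a (gcd N t)) 1)"
proof (induction N arbitrary: t rule: less_induct)
  case (less N)
  have N0: "N > 0" using less.prems n by (auto intro: Nat.gr0I)
  show ?case
  proof (cases "N dvd t")
    case True
    then have "E t N = 1" using E_eq_1[OF N0] by simp
    moreover have "gcd N t = N" using True by (simp add: gcd_nat.absorb1)
    ultimately show ?thesis by (simp add: ev_at1)
  next
    case False
    have t0: "t > 0" using False by (auto intro: Nat.gr0I)
    obtain p where p: "prime p" and mlt: "multiplicity p t < multiplicity p N"
    proof -
      have "\<exists>p. prime p \<and> multiplicity p t < multiplicity p N"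
      proof (rule ccontr)
        assume "\<not> ?thesis"
        then have "N dvd t" using N0 by (intro multiplicity_le_imp_dvd) (auto simp: not_less)
        then show False using False by simp
      qed
      then show ?thesis using that by blast
    qed
    have pN: "p dvd N" using mlt not_dvd_imp_multiplicity_0[of p N] by auto
    define z where "z = E t N"
    have zN: "z ^ N = 1" using E_N[OF N0] by (simp add: z_def)
    have z1: "z \<noteq> 1" using E_eq_1[OF N0] False by (simp add: z_def)
    define Sp where "Sp = {d. d dvd N \<and> mu d = 1}"
    define Sm where "Sm = {d. d dvd N \<and> mu d = -1}"
    have finSp: "finite Sp" unfolding Sp_def
      by (rule finite_subset[of _ "{..N}"]) (auto simp: N0 dvd_imp_le)
    have finSm: "finite Sm" unfolding Sm_def
      by (rule finite_subset[of _ "{..N}"]) (auto simp: N0 dvd_imp_le)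
    define F where "F d = ev (a (N div d)) (E t (N div d))" for d
    define H where "H d = (of_int (poly (a (gcd (N div d) t)) 1) :: complex)" for d
    have FH: "F d = H d" if "d dvd N" "d \<noteq> 1" for d
    proof -
      have d0: "d > 0" using that N0 by (auto intro: Nat.gr0I)
      have "N div d < N" using d0 that N0 by (intro div_less_dividend) auto
      moreover have "N div d dvd n" using less.prems that
        by (metis div_dvd_self' dvd_trans)
      ultimately show ?thesis using less.IH by (simp add: F_def H_def)
    qed
    have EGN: "q_int N dvd ((\<Prod>d\<in>Sp. subst_pow (a (N div d)) d) - (\<Prod>d\<in>Sm. subst_pow (a (N div d)) d))"
      using EG N0 unfolding q_euler_gauss_def Sp_def Sm_def by auto
    have eq: "(\<Prod>d\<in>Sp. F d) = (\<Prod>d\<in>Sm. F d)"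
    proof -
      have "ev ((\<Prod>d\<in>Sp. subst_pow (a (N div d)) d) - (\<Prod>d\<in>Sm. subst_pow (a (N div d)) d)) z = 0"
        by (rule ev_dvd[OF EGN zN z1])
      moreover have "ev (subst_pow (a (N div d)) d) z = F d" if "d dvd N" for d
        using that N0 by (simp add: ev_subst_pow z_def E_pow F_def)
      ultimately show ?thesis by (simp add: ev_diff ev_prod Sp_def Sm_def)
    qed
    have sfS: "squarefree d" if "d \<in> Sp \<union> Sm" for d
      using that by (auto simp: Sp_def Sm_def mu_def split: if_splits)
    have mu1: "mu 1 = 1" by (simp add: mu_def)
    have one: "1 \<in> Sp" by (simp add: Sp_def mu_def)
    have pSm: "p \<in> Sm" using p pN by (simp add: Sm_def mu_def squarefree_prime prime_prime_factors)
    have p1: "p \<noteq> 1" using p by auto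
    have Htog: "H (tog p d) = H d" if "d \<in> Sp \<union> Sm" for d
      using gcd_tog[OF p mlt t0 N0 pN _ sfS[OF that]] that by (auto simp: H_def Sp_def Sm_def)
    have togp: "tog p p = 1" using p by (simp add: tog_def)
    have tog1: "tog p 1 = p" using p by (simp add: tog_def)
    have bij: "bij_betw (tog p) (Sp - {1}) (Sm - {p})"
    proof (rule bij_betw_byWitness[where f'="tog p"])
      show "\<forall>x\<in>Sp - {1}. tog p (tog p x) = x" using tog_props(1)[OF p] sfS by auto
      show "\<forall>x\<in>Sm - {p}. tog p (tog p x) = x" using tog_props(1)[OF p] sfS by auto
      show "tog p ` (Sp - {1}) \<subseteq> Sm - {p}"
      proof
        fix y assume "y \<in> tog p ` (Sp - {1})"
        then obtain x where x: "x \<in> Sp" "x \<noteq> 1" "y = tog p x" by auto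
        have sx: "squarefree x" using sfS x by auto
        have "y dvd N" using tog_dvd[OF p pN _ sx] x by (auto simp: Sp_def)
        moreover have "mu y = -1" using tog_props(3)[OF p sx] x by (auto simp: Sp_def)
        moreover have "y \<noteq> p" using tog_props(1)[OF p sx] x togp by auto
        ultimately show "y \<in> Sm - {p}" by (simp add: Sm_def)
      qed
      show "tog p ` (Sm - {p}) \<subseteq> Sp - {1}"
      proof
        fix y assume "y \<in> tog p ` (Sm - {p})"
        then obtain x where x: "x \<in> Sm" "x \<noteq> p" "y = tog p x" by auto
        have sx: "squarefree x" using sfS x by auto
        have "y dvd N" using tog_dvd[OF p pN _ sx] x by (auto simp: Sm_def)
        moreover have "mu y = 1" using tog_props(3)[OF p sx] x by (auto simp: Sm_def)
        moreover have "y \<noteq> 1" using tog_props(1)[OF p sx] x tog1 by auto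
        ultimately show "y \<in> Sp - {1}" by (simp add: Sp_def)
      qed
    qed
    define A where "A = (\<Prod>d\<in>Sp - {1}. H d)"
    have "(\<Prod>d\<in>Sp - {1}. H (tog p d)) = (\<Prod>d\<in>Sm - {p}. H d)"
      by (rule prod.reindex_bij_betw[OF bij])
    then have AA: "(\<Prod>d\<in>Sm - {p}. H d) = A"
      unfolding A_def using Htog by (metis (no_types, lifting) DiffD1 UnI1 prod.cong)
    have lhs: "(\<Prod>d\<in>Sp. F d) = F 1 * A"
    proof -
      have "(\<Prod>d\<in>Sp. F d) = F 1 * (\<Prod>d\<in>Sp - {1}. F d)"
        using prod.remove[OF finSp one] by simp
      also have "(\<Prod>d\<in>Sp - {1}. F d) = A"
        unfolding A_def by (rule prod.cong) (auto simp: FH Sp_def)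
      finally show ?thesis .
    qed
    have rhs: "(\<Prod>d\<in>Sm. F d) = H p * A"
    proof -
      have "(\<Prod>d\<in>Sm. F d) = F p * (\<Prod>d\<in>Sm - {p}. F d)"
        using prod.remove[OF finSm pSm] by simp
      also have "(\<Prod>d\<in>Sm - {p}. F d) = (\<Prod>d\<in>Sm - {p}. H d)"
        using mu1 by (intro prod.cong) (auto simp: Sm_def intro!: FH)
      also have "F p = H p" using FH pN p1 by simp
      finally show ?thesis using AA by simp
    qed
    have Hp: "H p = H 1"
      using gcd_toggle[OF p mlt t0 N0, of 1] pN p1 by (simp add: H_def)
    have A0: "A \<noteq> 0"
    proof -
      have "H d \<noteq> 0" if "d \<in> Sp - {1}" for d
      proof -
        have dN: "d dvd N" "mu d = 1" "d \<noteq> 1" using that by (auto simp: Sp_def)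
        have "gcd (N div d) t dvd n"
          using less.prems dN N0 by (meson div_dvd_self' dvd_trans gcd_dvd1)
        moreover have "\<not> prime_power_or_one (n div gcd (N div d) t)"
          using nonpp[OF n less.prems dN p mlt t0] .
        ultimately show ?thesis using nz by (simp add: H_def)
      qed
      then show ?thesis unfolding A_def using finSp by (simp add: prod_zero_iff)
    qed
    have "F 1 * A = H 1 * A" using eq lhs rhs Hp by simp
    then have "F 1 = H 1" using A0 by simp
    then show ?thesis by (simp add: F_def H_def)
  qed
qed

theorem corollary2:
  fixes X :: "nat \<Rightarrow> 'b set" and a :: "nat \<Rightarrow> int poly" and n :: nat
    and phi :: "int \<Rightarrow> 'b \<Rightarrow> 'b"
  assumes fin: "\<And>m. m \<ge> 1 \<Longrightarrow> finite (X m)"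
    and EG: "q_euler_gauss a"
    and n: "n \<ge> 1"
    and nz: "\<And>d. d dvd n \<Longrightarrow> \<not> prime_power_or_one (n div d) \<Longrightarrow> poly (a d) 1 \<noteq> 0"
    and hcard: "\<And>d. d dvd n \<Longrightarrow> int (card (X d)) = poly (a d) 1"
    and act: "group_action (integer_mod_group n) (X n) phi"
    and fixpt: "\<And>i. i \<in> carrier (integer_mod_group n) \<Longrightarrow>
                card (fixpts (X n) phi i) = card (X (nat (gcd (int n) i)))"
  shows "cyclic_sieving (X n) n phi (a n)"
  unfolding cyclic_sieving_def
proof
  fix i assume i: "i \<in> carrier (integer_mod_group n)"
  have n0: "n > 0" using n by simp
  have i0: "i \<ge> 0" using i n0 by (simp add: carrier_integer_mod_group)
  define t where "t = nat i"
  have it: "i = int t" using i0 by (simp add: t_def)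
  have g: "nat (gcd (int n) i) = gcd n t" by (simp add: it gcd_int_def)
  have "exp (2 * pi * \<i> / of_nat n) ^ nat i = exp (of_nat t * (2 * pi * \<i> / of_nat n))"
    by (simp only: exp_of_nat_mult t_def)
  also have "\<dots> = E t n" by (simp add: E_def mult_ac)
  finally have ex: "exp (2 * pi * \<i> / of_nat n) ^ nat i = E t n" .
  have "ev (a n) (E t n) = of_int (poly (a (gcd n t)) 1)"
    using main_lemma[OF EG n0 nz] by simp
  also have "poly (a (gcd n t)) 1 = int (card (X (gcd n t)))"
    using hcard[of "gcd n t"] by simp
  finally have "ev (a n) (E t n) = of_nat (card (X (gcd n t)))" by simp
  then show "complex_of_nat (card (fixpts (X n) phi i)) =
        poly (map_poly of_int (a n)) (exp (2 * pi * \<i> / of_nat n) ^ nat i)"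
    using fixpt[OF i] g ex by (simp add: ev_def)
qed

end
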